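(* Let $(V,E)$ be a graph with $|V|=n$. Then $|\{X\subseteq V\mid X \text{ is a clique}\}|\cdot|\{Y\subseteq V \mid Y\text{ is a coclique}\}| \le (n+1)2^n$.
   Context: A graph is a finite simple undirected graph $(V,E)$. A clique is a set $X\subseteq V$ with every two distinct vertices adjacent; a coclique is a set $Y\subseteq V$ with no two distinct vertices adjacent (the empty set and singletons count as both). *)

theory Defs
  imports Main
begin

definition simple_graph :: "'a set \<Rightarrow> 'a set set \<Rightarrow> bool" where
  "simple_graph V E \<longleftrightarrow> finite V \<and> (\<forall>e\<in>E. e \<subseteq> V \<and> card e = 2)"

definition is_clique :: "'a set set \<Rightarrow> 'a set \<Rightarrow> bool" where
  "is_clique E X \<longleftrightarrow> (\<forall>x\<in>X. \<forall>y\<in>X. x \<noteq> y \<longrightarrow> {x, y} \<in> E)"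

definition is_coclique :: "'a set set \<Rightarrow> 'a set \<Rightarrow> bool" where
  "is_coclique E Y \<longleftrightarrow> (\<forall>x\<in>Y. \<forall>y\<in>Y. x \<noteq> y \<longrightarrow> {x, y} \<notin> E)"

end

theory Submission
  imports Defs
begin

definition cl :: "'a set set \<Rightarrow> 'a set \<Rightarrow> nat" where
  "cl E S = card {X. X \<subseteq> S \<and> is_clique E X}"
definition co :: "'a set set \<Rightarrow> 'a set \<Rightarrow> nat" where
  "co E S = card {Y. Y \<subseteq> S \<and> is_coclique E Y}"

lemma cl_le: "finite S \<Longrightarrow> cl E S \<le> 2 ^ card S"
proof -
  assume f: "finite S"
  have "cl E S \<le> card (Pow S)" unfolding cl_def
    by (rule card_mono) (use f in auto)
  thus ?thesis using f by (simp add: card_Pow)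
qed

lemma co_le: "finite S \<Longrightarrow> co E S \<le> 2 ^ card S"
proof -
  assume f: "finite S"
  have "co E S \<le> card (Pow S)" unfolding co_def
    by (rule card_mono) (use f in auto)
  thus ?thesis using f by (simp add: card_Pow)
qed

lemma cl_split:
  assumes f: "finite A" "finite B" and d: "A \<inter> B = {}"
  shows "cl E (A \<union> B) \<le> cl E A * cl E B"
proof -
  let ?f = "\<lambda>X. (X \<inter> A, X \<inter> B)"
  have "card {X. X \<subseteq> A \<union> B \<and> is_clique E X}
        \<le> card ({X. X \<subseteq> A \<and> is_clique E X} \<times> {X. X \<subseteq> B \<and> is_clique E X})"
  proof (rule card_inj_on_le[where f = ?f])
    show "inj_on ?f {X. X \<subseteq> A \<union> B \<and> is_clique E X}"
      by (rule inj_onI) auto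
    show "?f ` {X. X \<subseteq> A \<union> B \<and> is_clique E X}
          \<subseteq> {X. X \<subseteq> A \<and> is_clique E X} \<times> {X. X \<subseteq> B \<and> is_clique E X}"
      by (auto simp: is_clique_def)
    show "finite ({X. X \<subseteq> A \<and> is_clique E X} \<times> {X. X \<subseteq> B \<and> is_clique E X})"
      using f by auto
  qed
  thus ?thesis unfolding cl_def by (simp add: card_cartesian_product)
qed

lemma co_split:
  assumes f: "finite A" "finite B" and d: "A \<inter> B = {}"
  shows "co E (A \<union> B) \<le> co E A * co E B"
proof -
  let ?f = "\<lambda>X. (X \<inter> A, X \<inter> B)"
  have "card {X. X \<subseteq> A \<union> B \<and> is_coclique E X}
        \<le> card ({X. X \<subseteq> A \<and> is_coclique E X} \<times> {X. X \<subseteq> B \<and> is_coclique E X})"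
  proof (rule card_inj_on_le[where f = ?f])
    show "inj_on ?f {X. X \<subseteq> A \<union> B \<and> is_coclique E X}"
      by (rule inj_onI) auto
    show "?f ` {X. X \<subseteq> A \<union> B \<and> is_coclique E X}
          \<subseteq> {X. X \<subseteq> A \<and> is_coclique E X} \<times> {X. X \<subseteq> B \<and> is_coclique E X}"
      by (auto simp: is_coclique_def)
    show "finite ({X. X \<subseteq> A \<and> is_coclique E X} \<times> {X. X \<subseteq> B \<and> is_coclique E X})"
      using f by auto
  qed
  thus ?thesis unfolding co_def by (simp add: card_cartesian_product)
qed

lemma cl_decomp:
  assumes f: "finite S" and v: "v \<in> S"
  shows "cl E S = cl E (S - {v}) + cl E {u\<in>S. u \<noteq> v \<and> {u, v} \<in> E}"
proof -
  let ?N = "{u\<in>S. u \<noteq> v \<and> {u, v} \<in> E}"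
  let ?A = "{X. X \<subseteq> S - {v} \<and> is_clique E X}"
  let ?B = "{X. X \<subseteq> ?N \<and> is_clique E X}"
  have eq: "{X. X \<subseteq> S \<and> is_clique E X} = ?A \<union> insert v ` ?B"
  proof (rule set_eqI, rule iffI)
    fix X assume X: "X \<in> {X. X \<subseteq> S \<and> is_clique E X}"
    show "X \<in> ?A \<union> insert v ` ?B"
    proof (cases "v \<in> X")
      case True
      have "X - {v} \<in> ?B" using X True
        by (auto simp: is_clique_def)
      moreover have "X = insert v (X - {v})" using True by auto
      ultimately show ?thesis by blast
    qed (use X in auto)
  next
    fix X assume X: "X \<in> ?A \<union> insert v ` ?B"
    show "X \<in> {X. X \<subseteq> S \<and> is_clique E X}"
    proof (cases "X \<in> ?A")
      case True then show ?thesis by auto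
    next
      case False
      then obtain Y where Y: "Y \<in> ?B" and XY: "X = insert v Y" using X by blast
      have sub: "X \<subseteq> S" using Y v XY by auto
      have "is_clique E X" unfolding is_clique_def
      proof (intro ballI impI)
        fix x y assume xy: "x \<in> X" "y \<in> X" "x \<noteq> y"
        have YN: "\<And>u. u \<in> Y \<Longrightarrow> {u, v} \<in> E" using Y by blast
        have YC: "is_clique E Y" using Y by blast
        show "{x, y} \<in> E"
        proof (cases "x = v")
          case True
          then have "y \<in> Y" using xy XY by auto
          then have "{y, v} \<in> E" by (rule YN)
          moreover have "{y, v} = {x, y}" using True by (simp add: insert_commute)
          ultimately show ?thesis by simp
        next
          case False
          then have x: "x \<in> Y" using xy XY by auto
          show ?thesis
          proof (cases "y = v")
            case True then show ?thesis using YN[OF x] by simp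
          next
            case False
            then have "y \<in> Y" using xy XY by auto
            then show ?thesis using x xy YC unfolding is_clique_def by blast
          qed
        qed
      qed
      then show ?thesis using sub by simp
    qed
  qed
  have fA: "finite ?A" using f by auto
  have fB: "finite ?B" using f by auto
  have nv: "\<And>X. X \<in> ?B \<Longrightarrow> v \<notin> X" by auto
  have inj: "inj_on (insert v) ?B"
  proof (rule inj_onI)
    fix X Y assume XB: "X \<in> ?B" and YB: "Y \<in> ?B" and ins: "insert v X = insert v Y"
    have "X = insert v X - {v}" using nv[OF XB] by simp
    also have "\<dots> = insert v Y - {v}" using ins by simp
    also have "\<dots> = Y" using nv[OF YB] by simp
    finally show "X = Y" .
  qed
  have dj: "?A \<inter> insert v ` ?B = {}" by auto
  have "card (?A \<union> insert v ` ?B) = card ?A + card (insert v ` ?B)"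
    by (rule card_Un_disjoint) (use fA fB dj in auto)
  also have "card (insert v ` ?B) = card ?B" by (rule card_image[OF inj])
  finally show ?thesis unfolding cl_def using eq by simp
qed

lemma co_decomp:
  assumes f: "finite S" and v: "v \<in> S"
  shows "co E S = co E (S - {v}) + co E {u\<in>S. u \<noteq> v \<and> {u, v} \<notin> E}"
proof -
  let ?N = "{u\<in>S. u \<noteq> v \<and> {u, v} \<notin> E}"
  let ?A = "{X. X \<subseteq> S - {v} \<and> is_coclique E X}"
  let ?B = "{X. X \<subseteq> ?N \<and> is_coclique E X}"
  have eq: "{X. X \<subseteq> S \<and> is_coclique E X} = ?A \<union> insert v ` ?B"
  proof (rule set_eqI, rule iffI)
    fix X assume X: "X \<in> {X. X \<subseteq> S \<and> is_coclique E X}"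
    show "X \<in> ?A \<union> insert v ` ?B"
    proof (cases "v \<in> X")
      case True
      have "X - {v} \<in> ?B" using X True
        by (auto simp: is_coclique_def)
      moreover have "X = insert v (X - {v})" using True by auto
      ultimately show ?thesis by blast
    qed (use X in auto)
  next
    fix X assume X: "X \<in> ?A \<union> insert v ` ?B"
    show "X \<in> {X. X \<subseteq> S \<and> is_coclique E X}"
    proof (cases "X \<in> ?A")
      case True then show ?thesis by auto
    next
      case False
      then obtain Y where Y: "Y \<in> ?B" and XY: "X = insert v Y" using X by blast
      have sub: "X \<subseteq> S" using Y v XY by auto
      have "is_coclique E X" unfolding is_coclique_def
      proof (intro ballI impI)
        fix x y assume xy: "x \<in> X" "y \<in> X" "x \<noteq> y"
        have YN: "\<And>u. u \<in> Y \<Longrightarrow> {u, v} \<notin> E" using Y by blast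
        have YC: "is_coclique E Y" using Y by blast
        show "{x, y} \<notin> E"
        proof (cases "x = v")
          case True
          then have "y \<in> Y" using xy XY by auto
          then have "{y, v} \<notin> E" by (rule YN)
          moreover have "{y, v} = {x, y}" using True by (simp add: insert_commute)
          ultimately show ?thesis by simp
        next
          case False
          then have x: "x \<in> Y" using xy XY by auto
          show ?thesis
          proof (cases "y = v")
            case True then show ?thesis using YN[OF x] by simp
          next
            case False
            then have "y \<in> Y" using xy XY by auto
            then show ?thesis using x xy YC unfolding is_coclique_def by blast
          qed
        qed
      qed
      then show ?thesis using sub by simp
    qed
  qed
  have fA: "finite ?A" using f by auto
  have fB: "finite ?B" using f by auto
  have nv: "\<And>X. X \<in> ?B \<Longrightarrow> v \<notin> X" by auto
  have inj: "inj_on (insert v) ?B"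
  proof (rule inj_onI)
    fix X Y assume XB: "X \<in> ?B" and YB: "Y \<in> ?B" and ins: "insert v X = insert v Y"
    have "X = insert v X - {v}" using nv[OF XB] by simp
    also have "\<dots> = insert v Y - {v}" using ins by simp
    also have "\<dots> = Y" using nv[OF YB] by simp
    finally show "X = Y" .
  qed
  have dj: "?A \<inter> insert v ` ?B = {}" by auto
  have "card (?A \<union> insert v ` ?B) = card ?A + card (insert v ` ?B)"
    by (rule card_Un_disjoint) (use fA fB dj in auto)
  also have "card (insert v ` ?B) = card ?B" by (rule card_image[OF inj])
  finally show ?thesis unfolding co_def using eq by simp
qed

lemma arith_core:
  fixes c1 i1 cN iN cM iM a b :: nat
  assumes h1: "c1 * i1 \<le> (a + b + 1) * 2 ^ (a + b)"
    and h2: "c1 \<le> cN * cM" and h3: "i1 \<le> iN * iM"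
    and h4: "cN * iN \<le> (a + 1) * 2 ^ a" and h5: "cM * iM \<le> (b + 1) * 2 ^ b"
    and h6: "cN \<le> 2 ^ a" and h7: "iM \<le> 2 ^ b"
  shows "(c1 + cN) * (i1 + iM) \<le> (a + b + 2) * 2 ^ (a + b + 1)"
proof -
  have A: "cN * i1 \<le> (a + 1) * 2 ^ a * 2 ^ b"
  proof -
    have "cN * i1 \<le> cN * (iN * iM)" using h3 by simp
    also have "\<dots> = (cN * iN) * iM" by simp
    also have "\<dots> \<le> (a + 1) * 2 ^ a * 2 ^ b" using h4 h7 by (rule mult_le_mono)
    finally show ?thesis .
  qed
  have B: "c1 * iM \<le> 2 ^ a * ((b + 1) * 2 ^ b)"
  proof -
    have "c1 * iM \<le> (cN * cM) * iM" using h2 by simp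
    also have "\<dots> = cN * (cM * iM)" by simp
    also have "\<dots> \<le> 2 ^ a * ((b + 1) * 2 ^ b)" using h6 h5 by (rule mult_le_mono)
    finally show ?thesis .
  qed
  have C: "cN * iM \<le> 2 ^ a * 2 ^ b" using h6 h7 by (rule mult_le_mono)
  have "(c1 + cN) * (i1 + iM) = c1 * i1 + cN * i1 + c1 * iM + cN * iM"
    by (simp add: algebra_simps)
  also have "\<dots> \<le> (a + b + 1) * 2 ^ (a + b) + (a + 1) * 2 ^ a * 2 ^ b
       + 2 ^ a * ((b + 1) * 2 ^ b) + 2 ^ a * 2 ^ b"
    using h1 A B C by linarith
  also have "\<dots> = (a + b + 2) * 2 ^ (a + b + 1)"
    by (simp add: power_add algebra_simps)
  finally show ?thesis .
qed

lemma main: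
  "finite S \<Longrightarrow> cl E S * co E S \<le> (card S + 1) * 2 ^ card S"
proof (induction S rule: finite_psubset_induct)
  case (psubset S)
  show ?case
  proof (cases "S = {}")
    case True
    have a: "{X. X \<subseteq> S \<and> is_clique E X} = {{}}" using True by (auto simp: is_clique_def)
    have b: "{X. X \<subseteq> S \<and> is_coclique E X} = {{}}" using True by (auto simp: is_coclique_def)
    show ?thesis unfolding cl_def co_def a b using True by simp
  next
    case False
    then obtain v where v: "v \<in> S" by blast
    let ?N = "{u\<in>S. u \<noteq> v \<and> {u, v} \<in> E}"
    let ?M = "{u\<in>S. u \<noteq> v \<and> {u, v} \<notin> E}"
    have fN: "finite ?N" and fM: "finite ?M" using psubset.hyps by simp_all
    have un: "S - {v} = ?N \<union> ?M" by auto
    have dj: "?N \<inter> ?M = {}" by auto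
    have cardS: "card S = card ?N + card ?M + 1"
    proof -
      have "card (S - {v}) = card ?N + card ?M"
        unfolding un by (rule card_Un_disjoint[OF fN fM dj])
      moreover have "card S = card (S - {v}) + 1"
        using card_Suc_Diff1[OF psubset.hyps v] by simp
      ultimately show ?thesis by simp
    qed
    have h1: "cl E (S - {v}) * co E (S - {v}) \<le> (card ?N + card ?M + 1) * 2 ^ (card ?N + card ?M)"
    proof -
      have "cl E (S - {v}) * co E (S - {v}) \<le> (card (S - {v}) + 1) * 2 ^ card (S - {v})"
        by (rule psubset.IH) (use v in blast)
      moreover have "card (S - {v}) = card ?N + card ?M"
        unfolding un by (rule card_Un_disjoint[OF fN fM dj])
      ultimately show ?thesis by simp
    qed
    have h2: "cl E (S - {v}) \<le> cl E ?N * cl E ?M" using cl_split[OF fN fM dj] un by simp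
    have h3: "co E (S - {v}) \<le> co E ?N * co E ?M" using co_split[OF fN fM dj] un by simp
    have h4: "cl E ?N * co E ?N \<le> (card ?N + 1) * 2 ^ card ?N"
      by (rule psubset.IH) (use v in blast)
    have h5: "cl E ?M * co E ?M \<le> (card ?M + 1) * 2 ^ card ?M"
      by (rule psubset.IH) (use v in blast)
    have h6: "cl E ?N \<le> 2 ^ card ?N" by (rule cl_le[OF fN])
    have h7: "co E ?M \<le> 2 ^ card ?M" by (rule co_le[OF fM])
    have "cl E S * co E S = (cl E (S - {v}) + cl E ?N) * (co E (S - {v}) + co E ?M)"
      using cl_decomp[OF psubset.hyps v] co_decomp[OF psubset.hyps v] by simp
    also have "\<dots> \<le> (card ?N + card ?M + 2) * 2 ^ (card ?N + card ?M + 1)"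
      by (rule arith_core[OF h1 h2 h3 h4 h5 h6 h7])
    also have "\<dots> = (card S + 1) * 2 ^ card S" using cardS by simp
    finally show ?thesis .
  qed
qed

theorem lemma6:
  fixes V :: "'a set" and E :: "'a set set" and n :: nat
  assumes "simple_graph V E" and "card V = n"
  shows "card {X. X \<subseteq> V \<and> is_clique E X} * card {Y. Y \<subseteq> V \<and> is_coclique E Y}
           \<le> (n + 1) * 2 ^ n"
  using main[of V E] assms by (simp add: simple_graph_def cl_def co_def)

end
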